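(* Let $d\ge 1$ and let $(f_0, f_1, \ldots, f_{d-1})$ be a finite sequence of integers with $f_i > 0$ for all $i$. Put $f_{-1}=1$. The following conditions are equivalent: (i) there is a pure quasi-forest $\Delta$ of dimension $d-1$ with $f(\Delta) = (f_0, \ldots, f_{d-1})$; (ii) there is a pure forest $\Delta$ of dimension $d-1$ with $f(\Delta) = (f_0, \ldots, f_{d-1})$; (iii) the integers $c_0,\ldots,c_d$ defined by $\sum_{i=0}^{d} f_{i-1}(x-1)^{i} = \sum_{i=0}^{d} c_i x^i$ satisfy $\sum_{i=k}^{d} c_i > 0$ for each $1 \le k \le d$ and $c_i \le 0$ for each $1 \le i < d$; (iv) the integers $b_1,\ldots,b_d$ defined by $\sum_{i=1}^{d} f_{i-1}(x-1)^{i-1} = \sum_{i=1}^{d} b_i x^{i-1}$ satisfy $0 < b_1 \le b_2 \le \cdots \le b_d$.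
   Context: A simplicial complex $\Delta$ on $[n]=\{1,\ldots,n\}$ is a collection of subsets of $[n]$ such that $\{i\}\in\Delta$ for every $i\in[n]$ and $G\subset F\in\Delta$ implies $G\in\Delta$. If $d=\max\{|F|:F\in\Delta\}$, then $\dim\Delta=d-1$. Facets are maximal faces; $\Delta$ is pure if all facets have the same cardinality. The $f$-vector is $f(\Delta)=(f_0,\ldots,f_{d-1})$, where $f_i$ is the number of faces with $i+1$ elements. For facets $F_{i_1},\ldots,F_{i_q}$, $\langle F_{i_1},\ldots,F_{i_q}\rangle$ denotes the subcomplex of all faces contained in some $F_{i_j}$. A facet $F$ of $\Delta$ is a leaf if there is a facet $G\neq F$ (a branch of $F$) with $H\cap F\subset G\cap F$ for all facets $H\neq F$. A quasi-forest is a simplicial complex whose facets admit an ordering $F_1,\ldots,F_s$ (a leaf order) such that for each $1<j\le s$, $F_j$ is a leaf of $\langle F_1,\ldots,F_j\rangle$. A forest is a simplicial complex such that for every nonempty subset $\{F_{i_1},\ldots,F_{i_q}\}$ of its facets, $\langle F_{i_1},\ldots,F_{i_q}\rangle$ has a leaf. (A complex with a single facet is regarded as a quasi-forest and forest.) *)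

theory Defs
  imports "HOL-Computational_Algebra.Polynomial"
begin

definition simplicial_complex :: "nat \<Rightarrow> nat set set \<Rightarrow> bool" where
  "simplicial_complex n \<Delta> \<longleftrightarrow>
     (\<forall>F\<in>\<Delta>. F \<subseteq> {1..n}) \<and>
     (\<forall>i\<in>{1..n}. {i} \<in> \<Delta>) \<and>
     (\<forall>F\<in>\<Delta>. \<forall>G. G \<subseteq> F \<longrightarrow> G \<in> \<Delta>)"

definition facets :: "'a set set \<Rightarrow> 'a set set" where
  "facets \<Delta> = {F \<in> \<Delta>. \<forall>G\<in>\<Delta>. F \<subseteq> G \<longrightarrow> G = F}"

definition pure :: "'a set set \<Rightarrow> bool" where
  "pure \<Delta> \<longleftrightarrow> (\<forall>F\<in>facets \<Delta>. \<forall>G\<in>facets \<Delta>. card F = card G)"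

text \<open>dim \<Delta> = d - 1 where d is the maximal cardinality of a face; we state
  it via d = max face cardinality.\<close>
definition max_face_card :: "'a set set \<Rightarrow> nat" where
  "max_face_card \<Delta> = Max (card ` \<Delta>)"

definition fnum :: "'a set set \<Rightarrow> nat \<Rightarrow> nat" where
  "fnum \<Delta> i = card {F \<in> \<Delta>. card F = i + 1}"

definition gen_complex :: "'a set set \<Rightarrow> 'a set set" where
  "gen_complex S = {G. \<exists>F\<in>S. G \<subseteq> F}"

definition is_leaf :: "'a set set \<Rightarrow> 'a set \<Rightarrow> bool" where
  "is_leaf \<Delta> F \<longleftrightarrow> F \<in> facets \<Delta> \<and>
     (\<exists>G\<in>facets \<Delta>. G \<noteq> F \<and> (\<forall>H\<in>facets \<Delta>. H \<noteq> F \<longrightarrow> H \<inter> F \<subseteq> G \<inter> F))"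

text \<open>Quasi-forest: there is a leaf order of the facets. With one facet the
  condition is vacuous, matching the convention.\<close>
definition quasi_forest :: "'a set set \<Rightarrow> bool" where
  "quasi_forest \<Delta> \<longleftrightarrow>
     (\<exists>L. distinct L \<and> set L = facets \<Delta> \<and>
        (\<forall>j. 1 < j \<and> j \<le> length L \<longrightarrow>
              is_leaf (gen_complex (set (take j L))) (L ! (j - 1))))"

text \<open>Forest: every nonempty set of facets generates a subcomplex with a leaf
  (a subcomplex with a single facet counts as having one, by convention).\<close>
definition forest :: "'a set set \<Rightarrow> bool" where
  "forest \<Delta> \<longleftrightarrow>
     (\<forall>S. S \<subseteq> facets \<Delta> \<and> S \<noteq> {} \<longrightarrow>
        card (facets (gen_complex S)) = 1 \<or> (\<exists>F. is_leaf (gen_complex S) F))"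

definition fm1 :: "(nat \<Rightarrow> int) \<Rightarrow> nat \<Rightarrow> int" where
  "fm1 f i = (if i = 0 then 1 else f (i - 1))"

definition c_poly :: "nat \<Rightarrow> (nat \<Rightarrow> int) \<Rightarrow> int poly" where
  "c_poly d f = (\<Sum>i = 0..d. smult (fm1 f i) ([:-1, 1:] ^ i))"

definition b_poly :: "nat \<Rightarrow> (nat \<Rightarrow> int) \<Rightarrow> int poly" where
  "b_poly d f = (\<Sum>i = 1..d. smult (f (i - 1)) ([:-1, 1:] ^ (i - 1)))"

definition realizes :: "nat \<Rightarrow> (nat \<Rightarrow> int) \<Rightarrow> nat set set \<Rightarrow> bool" where
  "realizes d f \<Delta> \<longleftrightarrow> max_face_card \<Delta> = d \<and> (\<forall>i<d. int (fnum \<Delta> i) = f i)"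

end

theory Submission
  imports Defs
begin

definition cpol :: "'a set set \<Rightarrow> int poly" where
  "cpol \<Delta> = (\<Sum>A\<in>\<Delta>. [:-1,1:] ^ card A)"

lemma pow_sum:
  fixes p :: "'b::comm_ring_1"
  assumes "finite B"
  shows "(\<Sum>A\<in>Pow B. p ^ card A) = (p + 1) ^ card B"
  using assms
proof (induction B rule: finite_induct)
  case empty
  then show ?case by simp
next
  case (insert b B)
  have PB: "Pow (insert b B) = Pow B \<union> insert b ` Pow B" by (rule Pow_insert)
  have disj: "Pow B \<inter> insert b ` Pow B = {}" using insert.hyps by auto
  have inj: "inj_on (insert b) (Pow B)" using insert.hyps(2) unfolding inj_on_def by (metis PowD insert_ident subsetD)
  have fin: "finite (Pow B)" using insert.hyps by simp
  have "(\<Sum>A\<in>insert b ` Pow B. p ^ card A) = (\<Sum>A\<in>Pow B. p ^ card (insert b A))"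
    by (rule sum.reindex[OF inj, unfolded comp_def])
  also have "\<dots> = (\<Sum>A\<in>Pow B. p * p ^ card A)"
  proof (rule sum.cong)
    fix A assume "A \<in> Pow B"
    then have "finite A" "b \<notin> A" using insert.hyps finite_subset by auto
    then show "p ^ card (insert b A) = p * p ^ card A" by simp
  qed simp
  also have "\<dots> = p * (p+1) ^ card B" by (simp only: sum_distrib_left[symmetric] insert.IH)
  finally have "(\<Sum>A\<in>insert b ` Pow B. p ^ card A) = p * (p+1) ^ card B" .
  then show ?case
    unfolding PB using insert.hyps insert.IH fin disj
    by (subst sum.union_disjoint) (auto simp: algebra_simps)
qed

lemma X_eq: "[:-1,1:] + 1 = (monom 1 1 :: int poly)"
  by (simp add: monom_Suc one_pCons)

lemma cpol_Pow: "finite B \<Longrightarrow> cpol (Pow B) = monom 1 (card B)"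
  unfolding cpol_def by (simp add: pow_sum X_eq monom_power)

lemma gen_insert: "gen_complex (insert F S) = gen_complex S \<union> Pow F"
  unfolding gen_complex_def by auto

lemma gen_UN: "gen_complex S = (\<Union>F\<in>S. Pow F)"
  unfolding gen_complex_def by auto

lemma finite_gen: "finite S \<Longrightarrow> \<forall>F\<in>S. finite F \<Longrightarrow> finite (gen_complex S)"
  unfolding gen_UN by auto

lemma finite_faces_gen: "\<forall>F\<in>S. finite F \<Longrightarrow> A \<in> gen_complex S \<Longrightarrow> finite A"
  unfolding gen_complex_def by (auto intro: finite_subset)

lemma facets_gen:
  assumes "\<forall>F\<in>S. \<forall>G\<in>S. F \<subseteq> G \<longrightarrow> F = G"
  shows "facets (gen_complex S) = S"
proof
  show "facets (gen_complex S) \<subseteq> S"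
  proof
    fix M assume "M \<in> facets (gen_complex S)"
    then have M: "M \<in> gen_complex S" "\<forall>G\<in>gen_complex S. M \<subseteq> G \<longrightarrow> G = M"
      unfolding facets_def by auto
    then obtain F where F: "F \<in> S" "M \<subseteq> F" unfolding gen_complex_def by auto
    then have "F \<in> gen_complex S" unfolding gen_complex_def by auto
    then have "F = M" using M(2) F(2) by auto
    then show "M \<in> S" using F(1) by simp
  qed
  show "S \<subseteq> facets (gen_complex S)"
  proof
    fix F assume F: "F \<in> S"
    have "G = F" if G1: "G \<in> gen_complex S" and G2: "F \<subseteq> G" for G
    proof -
      obtain H where "H \<in> S" "G \<subseteq> H" using G1 unfolding gen_complex_def by auto
      then have "F = H" using assms F G2 by auto
      then show "G = F" using G2 \<open>G \<subseteq> H\<close> by auto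
    qed
    moreover have "F \<in> gen_complex S" using F unfolding gen_complex_def by auto
    ultimately show "F \<in> facets (gen_complex S)" unfolding facets_def by auto
  qed
qed

lemma glue:
  assumes "finite S" "\<forall>H\<in>S. finite H" "finite F" "gen_complex S \<inter> Pow F = Pow B" "B \<subseteq> F"
  shows "cpol (gen_complex (insert F S)) = cpol (gen_complex S) + monom 1 (card F) - monom 1 (card B)"
proof -
  have fB: "finite B" using assms finite_subset by blast
  have "cpol (gen_complex (insert F S)) = cpol (gen_complex S) + cpol (Pow F) - cpol (Pow B)"
    unfolding gen_insert cpol_def
    by (subst sum_Un) (use assms finite_gen in \<open>auto\<close>)
  then show ?thesis using cpol_Pow[OF assms(3)] cpol_Pow[OF fB] by simp
qed

definition Inv :: "nat \<Rightarrow> int poly \<Rightarrow> nat \<Rightarrow> bool" where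
  "Inv d p j \<longleftrightarrow> coeff p d = int j \<and> (\<forall>i. 1 \<le> i \<and> i < d \<longrightarrow> coeff p i \<le> 0)
     \<and> (\<Sum>i\<in>{1..<d}. coeff p i) \<ge> 1 - int j"

lemma qf_inv:
  assumes "L \<noteq> []" "distinct L" "\<forall>F\<in>set L. card F = d \<and> finite F"
    "\<forall>F\<in>set L. \<forall>G\<in>set L. F \<subseteq> G \<longrightarrow> F = G"
    "\<forall>j. 1 < j \<and> j \<le> length L \<longrightarrow> is_leaf (gen_complex (set (take j L))) (L ! (j - 1))"
  shows "Inv d (cpol (gen_complex (set L))) (length L)"
  using assms
proof (induction L rule: rev_induct)
  case Nil
  show ?case using Nil.prems(1) by simp
next
  case (snoc F L)
  have Fd: "card F = d" "finite F" using snoc.prems(3) by auto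
  show ?case
  proof (cases "L = []")
    case True
    have "gen_complex {F} = Pow F" unfolding gen_complex_def by auto
    then have e: "cpol (gen_complex (set (L @ [F]))) = monom 1 d" using True Fd cpol_Pow[OF Fd(2)] by simp
    have z: "(\<Sum>i\<in>{1..<d}. coeff (monom (1::int) d) i) = 0" by (rule sum.neutral) auto
    have l1: "length (L @ [F]) = 1" using True by simp
    have B: "\<forall>i. 1 \<le> i \<and> i < d \<longrightarrow> coeff (monom (1::int) d) i \<le> 0" by simp
    show ?thesis unfolding Inv_def e l1 using B z by simp
  next
    case False
    have IH: "Inv d (cpol (gen_complex (set L))) (length L)"
    proof (rule snoc.IH[OF False])
      show "distinct L" using snoc.prems(2) by simp
      show "\<forall>F\<in>set L. card F = d \<and> finite F" using snoc.prems(3) by simp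
      show "\<forall>F\<in>set L. \<forall>G\<in>set L. F \<subseteq> G \<longrightarrow> F = G" using snoc.prems(4) by simp
      show "\<forall>j. 1 < j \<and> j \<le> length L \<longrightarrow> is_leaf (gen_complex (set (take j L))) (L ! (j - 1))"
      proof (intro allI impI)
        fix j assume j: "1 < j \<and> j \<le> length L"
        have "is_leaf (gen_complex (set (take j (L @ [F])))) ((L @ [F]) ! (j - 1))"
          using mp[OF spec[OF snoc.prems(5), of j]] j by simp
        moreover have "take j (L @ [F]) = take j L" using j by simp
        moreover have "(L @ [F]) ! (j - 1) = L ! (j - 1)" using j by (auto simp: nth_append)
        ultimately show "is_leaf (gen_complex (set (take j L))) (L ! (j - 1))" by simp
      qed
    qed
    have "is_leaf (gen_complex (set (take (length L + 1) (L @ [F])))) ((L @ [F]) ! (length L + 1 - 1))"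
      using mp[OF spec[OF snoc.prems(5), of "length L + 1"]] False by simp
    moreover have "set (take (length L + 1) (L @ [F])) = insert F (set L)" by simp
    moreover have "(L @ [F]) ! (length L + 1 - 1) = F" by simp
    ultimately have leaf: "is_leaf (gen_complex (insert F (set L))) F" by simp
    have FnL: "F \<notin> set L" using snoc.prems(2) by simp
    have anti: "\<forall>A\<in>insert F (set L). \<forall>B\<in>insert F (set L). A \<subseteq> B \<longrightarrow> A = B"
      using snoc.prems(4) by simp
    have "\<exists>G\<in>facets (gen_complex (insert F (set L))). G \<noteq> F \<and> (\<forall>H\<in>facets (gen_complex (insert F (set L))). H \<noteq> F \<longrightarrow> H \<inter> F \<subseteq> G \<inter> F)"
      using leaf unfolding is_leaf_def by (rule conjunct2)
    then have "\<exists>G\<in>insert F (set L). G \<noteq> F \<and> (\<forall>H\<in>insert F (set L). H \<noteq> F \<longrightarrow> H \<inter> F \<subseteq> G \<inter> F)"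
      unfolding facets_gen[OF anti] .
    then obtain G where G: "G \<in> insert F (set L)" "G \<noteq> F"
      "\<forall>H\<in>insert F (set L). H \<noteq> F \<longrightarrow> H \<inter> F \<subseteq> G \<inter> F"
      by blast
    have GL: "G \<in> set L" using G(1) G(2) by simp
    have inter: "gen_complex (set L) \<inter> Pow F = Pow (G \<inter> F)"
    proof
      show "gen_complex (set L) \<inter> Pow F \<subseteq> Pow (G \<inter> F)"
      proof
        fix A assume "A \<in> gen_complex (set L) \<inter> Pow F"
        then obtain H where H: "H \<in> set L" "A \<subseteq> H" "A \<subseteq> F" unfolding gen_complex_def by auto
        then have "H \<noteq> F" "H \<in> insert F (set L)" using FnL by auto
        then have "H \<inter> F \<subseteq> G \<inter> F" using G(3) by simp
        then show "A \<in> Pow (G \<inter> F)" using \<open>A \<subseteq> H\<close> \<open>A \<subseteq> F\<close> by blast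
      qed
      show "Pow (G \<inter> F) \<subseteq> gen_complex (set L) \<inter> Pow F"
        using GL unfolding gen_complex_def by auto
    qed
    have "\<not> F \<subseteq> G" using bspec[OF bspec[OF anti, of F], of G] GL G(2) by auto
    then have "G \<inter> F \<subset> F" by blast
    then have a_lt: "card (G \<inter> F) < d" using psubset_card_mono[OF Fd(2)] Fd(1) by simp
    define a where "a = card (G \<inter> F)"
    have eq: "cpol (gen_complex (set (L @ [F]))) = cpol (gen_complex (set L)) + monom 1 d - monom 1 a"
    proof -
      have "cpol (gen_complex (insert F (set L))) = cpol (gen_complex (set L)) + monom 1 (card F) - monom 1 (card (G \<inter> F))"
        by (rule glue[OF _ _ _ inter]) (use snoc.prems(3) Fd in auto)
      then show ?thesis using Fd(1) a_def by simp
    qed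
    have s: "(\<Sum>i\<in>{1..<d}. coeff (monom (1::int) a) i) = (if 1 \<le> a then 1 else 0)"
      using a_lt a_def by (simp add: sum.delta)
    have IH1: "coeff (cpol (gen_complex (set L))) d = int (length L)"
      using IH by (simp add: Inv_def)
    have IH2: "coeff (cpol (gen_complex (set L))) i \<le> 0" if "1 \<le> i" "i < d" for i
      using IH that by (simp add: Inv_def)
    have IH3: "(\<Sum>i\<in>{1..<d}. coeff (cpol (gen_complex (set L))) i) \<ge> 1 - int (length L)"
      using IH by (simp add: Inv_def)
    have c1: "coeff (cpol (gen_complex (set (L @ [F])))) d = coeff (cpol (gen_complex (set L))) d + 1"
      using a_lt a_def unfolding eq by simp
    have c2: "coeff (cpol (gen_complex (set (L @ [F])))) i = coeff (cpol (gen_complex (set L))) i - (if a = i then 1 else 0)"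
      if "i < d" for i
      using that unfolding eq by simp
    have c3: "(\<Sum>i\<in>{1..<d}. coeff (cpol (gen_complex (set (L @ [F])))) i) = (\<Sum>i\<in>{1..<d}. coeff (cpol (gen_complex (set L))) i) - (if 1 \<le> a then 1 else 0)"
    proof -
      have "(\<Sum>i\<in>{1..<d}. coeff (cpol (gen_complex (set (L @ [F])))) i) = (\<Sum>i\<in>{1..<d}. coeff (cpol (gen_complex (set L))) i - coeff (monom (1::int) a) i)"
      proof (rule sum.cong)
        fix i assume "i \<in> {1..<d}"
        then show "coeff (cpol (gen_complex (set (L @ [F])))) i = coeff (cpol (gen_complex (set L))) i - coeff (monom (1::int) a) i"
          using c2[of i] by simp
      qed simp
      also have "\<dots> = (\<Sum>i\<in>{1..<d}. coeff (cpol (gen_complex (set L))) i) - (\<Sum>i\<in>{1..<d}. coeff (monom (1::int) a) i)"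
        by (rule sum_subtractf)
      finally show ?thesis using s by simp
    qed
    have len: "int (length (L @ [F])) = int (length L) + 1" by simp
    have le1: "(if 1 \<le> a then 1 else 0) \<le> (1::int)" by simp
    have A1: "coeff (cpol (gen_complex (set (L @ [F])))) d = int (length (L @ [F]))"
      using IH1 c1 len by linarith
    have A2: "\<forall>i. 1 \<le> i \<and> i < d \<longrightarrow> coeff (cpol (gen_complex (set (L @ [F])))) i \<le> 0"
    proof (intro allI impI)
      fix i assume i: "1 \<le> i \<and> i < d"
      have o: "coeff (cpol (gen_complex (set L))) i \<le> 0" using IH2[of i] i by blast
      have z: "(if a = i then 1 else 0) \<ge> (0::int)" by simp
      show "coeff (cpol (gen_complex (set (L @ [F])))) i \<le> 0"
        using c2[OF conjunct2[OF i]] o z by linarith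
    qed
    have A3: "(\<Sum>i\<in>{1..<d}. coeff (cpol (gen_complex (set (L @ [F])))) i) \<ge> 1 - int (length (L @ [F]))"
      using IH3 c3 len le1 by linarith
    show ?thesis unfolding Inv_def using A1 A2 A3 by blast
  qed
qed

lemma face_in_facet:
  assumes "finite \<Delta>" "\<forall>A\<in>\<Delta>. finite A" "A \<in> \<Delta>"
  shows "\<exists>F\<in>facets \<Delta>. A \<subseteq> F"
proof -
  define C where "C = {B\<in>\<Delta>. A \<subseteq> B}"
  have fC: "finite C" using assms(1) unfolding C_def by simp
  have AC: "A \<in> C" using assms(3) unfolding C_def by simp
  have "Max (card ` C) \<in> card ` C" using fC AC by (intro Max_in) auto
  then obtain F where F: "F \<in> C" "card F = Max (card ` C)" by force
  have "G = F" if G: "G \<in> \<Delta>" "F \<subseteq> G" for G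
  proof -
    have "G \<in> C" using G F(1) unfolding C_def by auto
    then have "card G \<le> card F" using F(2) fC by simp
    moreover have "finite G" using G assms(2) by simp
    ultimately show "G = F" using card_subset_eq[of G F] G(2) card_mono[of G F]
      by (metis antisym card_mono)
  qed
  then have "F \<in> facets \<Delta>" using F(1) unfolding facets_def C_def by auto
  then show ?thesis using F(1) unfolding C_def by auto
qed

lemma gen_facets:
  assumes "finite \<Delta>" "\<forall>A\<in>\<Delta>. finite A" "\<forall>F\<in>\<Delta>. \<forall>G. G \<subseteq> F \<longrightarrow> G \<in> \<Delta>"
  shows "gen_complex (facets \<Delta>) = \<Delta>"
proof
  show "gen_complex (facets \<Delta>) \<subseteq> \<Delta>"
    using assms(3) unfolding gen_complex_def facets_def by auto
  show "\<Delta> \<subseteq> gen_complex (facets \<Delta>)"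
    using face_in_facet[OF assms(1,2)] unfolding gen_complex_def by auto
qed

lemma facets_anti: "\<forall>F\<in>facets \<Delta>. \<forall>G\<in>facets \<Delta>. F \<subseteq> G \<longrightarrow> F = G"
  unfolding facets_def by auto

lemma cpol_group:
  assumes "finite \<Delta>" "\<forall>A\<in>\<Delta>. card A \<le> d"
  shows "cpol \<Delta> = (\<Sum>i = 0..d. smult (int (card {A\<in>\<Delta>. card A = i})) ([:-1,1:] ^ i))"
proof -
  have "cpol \<Delta> = (\<Sum>i\<in>{0..d}. \<Sum>A\<in>{A \<in> \<Delta>. card A = i}. [:-1,1:] ^ card A)"
    unfolding cpol_def
    by (rule sum.group[symmetric]) (use assms in auto)
  also have "\<dots> = (\<Sum>i = 0..d. smult (int (card {A\<in>\<Delta>. card A = i})) ([:-1,1:] ^ i))"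
  proof (rule sum.cong)
    fix i
    have "(\<Sum>A\<in>{A \<in> \<Delta>. card A = i}. [:-1,1:] ^ card A) = (\<Sum>A\<in>{A \<in> \<Delta>. card A = i}. ([:-1,1:] :: int poly) ^ i)"
      by (rule sum.cong) auto
    also have "\<dots> = of_nat (card {A \<in> \<Delta>. card A = i}) * [:-1,1:] ^ i" by simp
    also have "\<dots> = smult (int (card {A\<in>\<Delta>. card A = i})) ([:-1,1:] ^ i)"
      by (simp add: of_nat_poly)
    finally show "(\<Sum>A\<in>{A \<in> \<Delta>. card A = i}. [:-1,1:] ^ card A) = smult (int (card {A\<in>\<Delta>. card A = i})) ([:-1,1:] ^ i)" .
  qed simp
  finally show ?thesis .
qed

lemma basic_facts:
  assumes sc: "simplicial_complex n \<Delta>" and pu: "pure \<Delta>" and re: "realizes d f \<Delta>"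
    and d1: "d \<ge> 1" and f0: "f 0 > 0"
  shows "finite \<Delta>" "\<forall>A\<in>\<Delta>. finite A" "{} \<in> \<Delta>" "\<forall>A\<in>\<Delta>. card A \<le> d"
    "\<forall>F\<in>facets \<Delta>. card F = d" "facets \<Delta> \<noteq> {}" "cpol \<Delta> = c_poly d f"
    "\<forall>F\<in>\<Delta>. \<forall>G. G \<subseteq> F \<longrightarrow> G \<in> \<Delta>"
proof -
  have sub: "\<forall>F\<in>\<Delta>. F \<subseteq> {1..n}" and cl: "\<forall>F\<in>\<Delta>. \<forall>G. G \<subseteq> F \<longrightarrow> G \<in> \<Delta>"
    using sc unfolding simplicial_complex_def by auto
  then show "\<forall>F\<in>\<Delta>. \<forall>G. G \<subseteq> F \<longrightarrow> G \<in> \<Delta>" by simp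
  show fD: "finite \<Delta>"
    by (rule finite_subset[of _ "Pow {1..n}"]) (use sub in auto)
  show fA: "\<forall>A\<in>\<Delta>. finite A" using sub by (meson finite_atLeastAtMost finite_subset)
  have md: "Max (card ` \<Delta>) = d" using re unfolding realizes_def max_face_card_def by simp
  have fn0: "int (fnum \<Delta> 0) = f 0" using re d1 unfolding realizes_def by simp
  then have "fnum \<Delta> 0 > 0" using f0 by simp
  then have "{F \<in> \<Delta>. card F = 0 + 1} \<noteq> {}" unfolding fnum_def by (metis card.empty less_irrefl)
  then obtain A0 where A0: "A0 \<in> \<Delta>" by auto
  then show e: "{} \<in> \<Delta>" using cl by auto
  show le: "\<forall>A\<in>\<Delta>. card A \<le> d" using md fD by auto
  have "d \<in> card ` \<Delta>" using md fD A0 Max_in[of "card ` \<Delta>"] by auto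
  then obtain A where A: "A \<in> \<Delta>" "card A = d" by auto
  obtain F where F: "F \<in> facets \<Delta>" "A \<subseteq> F" using face_in_facet[OF fD fA A(1)] by auto
  have "F \<in> \<Delta>" using F unfolding facets_def by auto
  then have "card F = d" using le fA F(2) A(2) card_mono[of F A] by (metis antisym)
  then show "\<forall>G\<in>facets \<Delta>. card G = d" using pu F(1) unfolding pure_def by metis
  show "facets \<Delta> \<noteq> {}" using F(1) by auto
  have "cpol \<Delta> = (\<Sum>i = 0..d. smult (int (card {A\<in>\<Delta>. card A = i})) ([:-1,1:] ^ i))"
    by (rule cpol_group[OF fD le])
  also have "\<dots> = c_poly d f"
    unfolding c_poly_def
  proof (rule sum.cong)
    fix i assume i: "i \<in> {0..d}"
    show "smult (int (card {A\<in>\<Delta>. card A = i})) ([:-1,1:] ^ i) = smult (fm1 f i) ([:-1,1:] ^ i)"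
    proof (cases "i = 0")
      case True
      have "{A\<in>\<Delta>. card A = 0} = {{}}" using e fA by auto
      then show ?thesis using True unfolding fm1_def by simp
    next
      case False
      have "int (fnum \<Delta> (i - 1)) = f (i - 1)" using re i False unfolding realizes_def by auto
      moreover have "fnum \<Delta> (i - 1) = card {A\<in>\<Delta>. card A = i}" unfolding fnum_def using False by simp
      ultimately show ?thesis using False unfolding fm1_def by simp
    qed
  qed simp
  finally show "cpol \<Delta> = c_poly d f" .
qed

lemma qf_to_c:
  assumes d1: "d \<ge> 1" and fpos: "\<forall>i<d. f i > 0"
    and sc: "simplicial_complex n \<Delta>" and pu: "pure \<Delta>" and qf: "quasi_forest \<Delta>" and re: "realizes d f \<Delta>"
  shows "(\<forall>k\<in>{1..d}. (\<Sum>i = k..d. coeff (c_poly d f) i) > 0) \<and>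
         (\<forall>i. 1 \<le> i \<and> i < d \<longrightarrow> coeff (c_poly d f) i \<le> 0)"
proof -
  have f0: "f 0 > 0" using fpos d1 by simp
  note bf = basic_facts[OF sc pu re d1 f0]
  obtain L where L: "distinct L" "set L = facets \<Delta>"
    "\<forall>j. 1 < j \<and> j \<le> length L \<longrightarrow> is_leaf (gen_complex (set (take j L))) (L ! (j - 1))"
    using qf unfolding quasi_forest_def by auto
  have Lne: "L \<noteq> []" using L(2) bf(6) by auto
  have "\<forall>F\<in>set L. card F = d \<and> finite F"
    using L(2) bf(5) bf(2) unfolding facets_def by auto
  moreover have "\<forall>F\<in>set L. \<forall>G\<in>set L. F \<subseteq> G \<longrightarrow> F = G"
    using L(2) facets_anti by metis
  ultimately have I: "Inv d (cpol (gen_complex (set L))) (length L)"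
    using qf_inv[OF Lne L(1) _ _ L(3)] by blast
  have "gen_complex (set L) = \<Delta>" using L(2) gen_facets[OF bf(1) bf(2) bf(8)] by simp
  then have I2: "Inv d (c_poly d f) (length L)" using I bf(7) by simp
  define c where "c = coeff (c_poly d f)"
  have cd: "c d = int (length L)" and cneg: "\<And>i. 1 \<le> i \<Longrightarrow> i < d \<Longrightarrow> c i \<le> 0"
    and csum: "(\<Sum>i\<in>{1..<d}. c i) \<ge> 1 - int (length L)"
    using I2 unfolding Inv_def c_def by auto
  have "(\<Sum>i = k..d. c i) > 0" if k: "k \<in> {1..d}" for k
  proof -
    have "(\<Sum>i = k..d. c i) = (\<Sum>i = k..<d. c i) + c d"
      using k by (simp add: atLeastLessThanSuc_atLeastAtMost[symmetric] sum.atLeastLessThan_Suc)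
    moreover have "(\<Sum>i = 1..<d. c i) = (\<Sum>i = 1..<k. c i) + (\<Sum>i = k..<d. c i)"
      using k by (simp add: sum.atLeastLessThan_concat)
    moreover have "(\<Sum>i = 1..<k. c i) \<le> 0"
      by (rule sum_nonpos) (use k cneg in auto)
    ultimately show ?thesis using cd csum by linarith
  qed
  then show ?thesis using cneg unfolding c_def by auto
qed

lemma forest_order:
  assumes fo: "forest \<Delta>" and fin: "finite (facets \<Delta>)"
  shows "S \<subseteq> facets \<Delta> \<Longrightarrow> \<exists>L. distinct L \<and> set L = S \<and>
        (\<forall>j. 1 < j \<and> j \<le> length L \<longrightarrow> is_leaf (gen_complex (set (take j L))) (L ! (j - 1)))"
proof (induction "card S" arbitrary: S rule: less_induct)
  case less
  have fS: "finite S" using less.prems fin finite_subset by blast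
  have anti: "\<forall>F\<in>S. \<forall>G\<in>S. F \<subseteq> G \<longrightarrow> F = G" using less.prems facets_anti by blast
  show ?case
  proof (cases "card S \<le> 1")
    case True
    then have "S = {} \<or> (\<exists>F. S = {F})" using fS by (metis card_0_eq card_1_singletonE le_Suc_eq One_nat_def le_zero_eq)
    then show ?thesis
    proof
      assume "S = {}" then show ?thesis by (intro exI[of _ "[]"]) simp
    next
      assume "\<exists>F. S = {F}"
      then obtain F where "S = {F}" by blast
      then show ?thesis by (intro exI[of _ "[F]"]) auto
    qed
  next
    case False
    then have "S \<noteq> {}" by auto
    then have "card (facets (gen_complex S)) = 1 \<or> (\<exists>F. is_leaf (gen_complex S) F)"
      using fo less.prems unfolding forest_def by blast
    moreover have "card (facets (gen_complex S)) \<noteq> 1" using False facets_gen[OF anti] by simp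
    ultimately obtain F where leaf: "is_leaf (gen_complex S) F" by blast
    then have FS: "F \<in> S" using facets_gen[OF anti] unfolding is_leaf_def by simp
    have "card (S - {F}) < card S" using FS fS by (meson card_Diff1_less)
    moreover have "S - {F} \<subseteq> facets \<Delta>" using less.prems by blast
    ultimately obtain L' where L': "distinct L'" "set L' = S - {F}"
        "\<forall>j. 1 < j \<and> j \<le> length L' \<longrightarrow> is_leaf (gen_complex (set (take j L'))) (L' ! (j - 1))"
      using less.hyps by blast
    define L where "L = L' @ [F]"
    have "distinct L" using L' unfolding L_def by simp
    moreover have "set L = S" using L' FS unfolding L_def by auto
    moreover have "\<forall>j. 1 < j \<and> j \<le> length L \<longrightarrow> is_leaf (gen_complex (set (take j L))) (L ! (j - 1))"
    proof (intro allI impI)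
      fix j assume j: "1 < j \<and> j \<le> length L"
      show "is_leaf (gen_complex (set (take j L))) (L ! (j - 1))"
      proof (cases "j \<le> length L'")
        case True
        have "take j L = take j L'" using True unfolding L_def by simp
        moreover have "L ! (j - 1) = L' ! (j - 1)" using True j unfolding L_def by (auto simp: nth_append)
        moreover have "is_leaf (gen_complex (set (take j L'))) (L' ! (j - 1))"
          using mp[OF spec[OF L'(3), of j]] j True by simp
        ultimately show ?thesis by simp
      next
        case False
        then have "j = length L" using j unfolding L_def by simp
        then have "take j L = L" "L ! (j - 1) = F" unfolding L_def by simp_all
        then show ?thesis using leaf \<open>set L = S\<close> by simp
      qed
    qed
    ultimately show ?thesis by blast
  qed
qed

lemma forest_qf:
  assumes "forest \<Delta>" "finite \<Delta>"
  shows "quasi_forest \<Delta>"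
  using forest_order[OF assms(1), of "facets \<Delta>"] assms(2)
  unfolding quasi_forest_def facets_def by simp

lemma c_b: "d \<ge> 1 \<Longrightarrow> c_poly d f = 1 + [:-1,1:] * b_poly d f"
proof -
  assume d: "d \<ge> 1"
  have "c_poly d f = smult (fm1 f 0) ([:-1,1:] ^ 0) + (\<Sum>i = Suc 0..d. smult (fm1 f i) ([:-1,1:] ^ i))"
    unfolding c_poly_def by (simp add: sum.atLeast_Suc_atMost)
  also have "(\<Sum>i = Suc 0..d. smult (fm1 f i) ([:-1,1:] ^ i)) = (\<Sum>i = 1..d. [:-1,1:] * smult (f (i - 1)) ([:-1,1:] ^ (i - 1)))"
  proof (rule sum.cong)
    fix i assume "i \<in> {1..d}"
    then have "i = Suc (i - 1)" by simp
    then have "([:-1,1:] :: int poly) ^ i = [:-1,1:] * [:-1,1:] ^ (i - 1)" by (metis power_Suc)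
    then show "smult (fm1 f i) ([:-1,1:] ^ i) = [:-1,1:] * smult (f (i - 1)) ([:-1,1:] ^ (i - 1))"
      using \<open>i \<in> {1..d}\<close> unfolding fm1_def by (simp add: mult_smult_right)
  qed simp
  also have "\<dots> = [:-1,1:] * b_poly d f" unfolding b_poly_def by (simp add: sum_distrib_left)
  finally show ?thesis unfolding fm1_def by simp
qed

lemma b_deg: "d \<ge> 1 \<Longrightarrow> k \<ge> d \<Longrightarrow> coeff (b_poly d f) k = 0"
proof -
  assume d: "d \<ge> 1" and k: "k \<ge> d"
  have "degree (b_poly d f) \<le> d - 1"
    unfolding b_poly_def
  proof (rule degree_sum_le)
    fix i assume "i \<in> {1..d}"
    then have i1: "i - 1 \<le> d - 1" by (simp add: diff_le_mono)
    have "degree (([:-1,1:] :: int poly) ^ (i - 1)) \<le> i - 1"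
      using degree_power_le[of "[:-1,1:] :: int poly" "i - 1"] by simp
    then have "degree (([:-1,1:] :: int poly) ^ (i - 1)) \<le> d - 1" using i1 by linarith
    then show "degree (smult (f (i - 1)) ([:-1,1:] ^ (i - 1))) \<le> d - 1"
      using degree_smult_le order_trans by blast
  qed simp
  then show ?thesis using d k by (intro coeff_eq_0) simp
qed

lemma c_coeff: "d \<ge> 1 \<Longrightarrow> coeff (c_poly d f) k =
   (if k = 0 then 1 else coeff (b_poly d f) (k - 1)) - coeff (b_poly d f) k"
  by (simp add: c_b coeff_pCons')

lemma tele: "1 \<le> k \<Longrightarrow> k \<le> Suc m \<Longrightarrow> (\<Sum>i = k..m. (h (i - 1) - h i)) = h (k - 1) - (h m :: int)"
proof (induction m)
  case 0
  then have "k = 1" by simp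
  then show ?case by simp
next
  case (Suc m)
  show ?case
  proof (cases "k = Suc (Suc m)")
    case True
    then show ?thesis by simp
  next
    case False
    then have "k \<le> Suc m" using Suc.prems by simp
    then show ?thesis using Suc by simp
  qed
qed

lemma c_tail: "d \<ge> 1 \<Longrightarrow> 1 \<le> k \<Longrightarrow> k \<le> d \<Longrightarrow> (\<Sum>i = k..d. coeff (c_poly d f) i) = coeff (b_poly d f) (k - 1)"
proof -
  assume d: "d \<ge> 1" and k: "1 \<le> k" "k \<le> d"
  have "(\<Sum>i = k..d. coeff (c_poly d f) i) = (\<Sum>i = k..d. coeff (b_poly d f) (i - 1) - coeff (b_poly d f) i)"
    by (rule sum.cong) (use k d in \<open>auto simp: c_coeff\<close>)
  also have "\<dots> = coeff (b_poly d f) (k - 1) - coeff (b_poly d f) d"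
    by (rule tele) (use k in auto)
  finally show ?thesis using b_deg[OF d, of d] by simp
qed

lemma c_sum1: "d \<ge> 1 \<Longrightarrow> (\<Sum>i = 0..d. coeff (c_poly d f) i) = 1"
proof -
  assume d: "d \<ge> 1"
  have "(\<Sum>i = 0..d. coeff (c_poly d f) i) = coeff (c_poly d f) 0 + (\<Sum>i = Suc 0..d. coeff (c_poly d f) i)"
    by (simp add: sum.atLeast_Suc_atMost)
  then show ?thesis using c_tail[OF d, where k=1 and f=f] d c_coeff[OF d, where k=0 and f=f] by simp
qed

lemma c_high: "d \<ge> 1 \<Longrightarrow> k > d \<Longrightarrow> coeff (c_poly d f) k = 0"
  using b_deg[of d "k" f] b_deg[of d "k - 1" f] by (simp add: c_coeff)

lemma iii_iv:
  assumes d: "d \<ge> 1"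
  shows "((\<forall>k\<in>{1..d}. (\<Sum>i = k..d. coeff (c_poly d f) i) > 0) \<and>
                (\<forall>i. 1 \<le> i \<and> i < d \<longrightarrow> coeff (c_poly d f) i \<le> 0))
           \<longleftrightarrow> (0 < coeff (b_poly d f) 0 \<and>
                (\<forall>i. 1 \<le> i \<and> i < d \<longrightarrow> coeff (b_poly d f) (i - 1) \<le> coeff (b_poly d f) i))"
proof -
  define \<beta> where "\<beta> = coeff (b_poly d f)"
  have ct: "(\<Sum>i = k..d. coeff (c_poly d f) i) = \<beta> (k - 1)" if "k \<in> {1..d}" for k
    using c_tail[OF d] that unfolding \<beta>_def by simp
  have cc: "coeff (c_poly d f) i = \<beta> (i - 1) - \<beta> i" if "1 \<le> i" for i
    using c_coeff[OF d] that unfolding \<beta>_def by simp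
  have mono: "\<beta> (k - 1) > 0" if "k \<in> {1..d}" "\<beta> 0 > 0" "\<forall>i. 1 \<le> i \<and> i < d \<longrightarrow> \<beta> (i - 1) \<le> \<beta> i" for k
    using that
  proof (induction k)
    case 0
    then show ?case by simp
  next
    case (Suc k)
    show ?case
    proof (cases "k = 0")
      case True
      then show ?thesis using Suc.prems by simp
    next
      case False
      then have "\<beta> (k - 1) > 0" using Suc by simp
      moreover have "\<beta> (k - 1) \<le> \<beta> k" using Suc.prems(1,3) False by simp
      ultimately show ?thesis by simp
    qed
  qed
  show ?thesis
  proof
    assume A: "(\<forall>k\<in>{1..d}. (\<Sum>i = k..d. coeff (c_poly d f) i) > 0) \<and>
                (\<forall>i. 1 \<le> i \<and> i < d \<longrightarrow> coeff (c_poly d f) i \<le> 0)"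
    have "1 \<in> {1..d}" using d by simp
    then have "(\<Sum>i = 1..d. coeff (c_poly d f) i) > 0" using A by blast
    then have "\<beta> 0 > 0" using ct[of 1] d by simp
    moreover have "\<beta> (i - 1) \<le> \<beta> i" if "1 \<le> i \<and> i < d" for i
      using A that cc[of i] by auto
    ultimately show "0 < coeff (b_poly d f) 0 \<and>
                (\<forall>i. 1 \<le> i \<and> i < d \<longrightarrow> coeff (b_poly d f) (i - 1) \<le> coeff (b_poly d f) i)"
      unfolding \<beta>_def by auto
  next
    assume B: "0 < coeff (b_poly d f) 0 \<and>
                (\<forall>i. 1 \<le> i \<and> i < d \<longrightarrow> coeff (b_poly d f) (i - 1) \<le> coeff (b_poly d f) i)"
    then have B1: "\<beta> 0 > 0" and B2: "\<forall>i. 1 \<le> i \<and> i < d \<longrightarrow> \<beta> (i - 1) \<le> \<beta> i"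
      unfolding \<beta>_def by auto
    have "(\<Sum>i = k..d. coeff (c_poly d f) i) > 0" if "k \<in> {1..d}" for k
      using ct[OF that] mono[OF that B1 B2] by simp
    moreover have "coeff (c_poly d f) i \<le> 0" if "1 \<le> i \<and> i < d" for i
      using B2 that cc[of i] by auto
    ultimately show "(\<forall>k\<in>{1..d}. (\<Sum>i = k..d. coeff (c_poly d f) i) > 0) \<and>
                (\<forall>i. 1 \<le> i \<and> i < d \<longrightarrow> coeff (c_poly d f) i \<le> 0)" by auto
  qed
qed

lemma construct:
  assumes d1: "d \<ge> 1"
  shows "\<forall>a\<in>#M. a < d \<Longrightarrow> \<exists>n S \<alpha>. finite S \<and> {1..d} \<in> S \<and> \<Union>S = {1..n} \<and>
     (\<forall>H\<in>S. card H = d \<and> finite H) \<and> (\<forall>H\<in>S. H \<inter> {1..d} = {1..\<alpha> H}) \<and>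
     (\<forall>H\<in>S. \<forall>H'\<in>S. H \<noteq> H' \<longrightarrow> H \<inter> H' \<subseteq> {1..d}) \<and>
     cpol (gen_complex S) = smult (of_nat (size M + 1)) (monom 1 d) - (\<Sum>a\<in>#M. monom 1 a)"
proof (induction M rule: multiset_induct)
  case empty
  have "gen_complex {{1..d}} = Pow {1..d}" unfolding gen_complex_def by auto
  then have "cpol (gen_complex {{1..d::nat}}) = monom 1 d" using cpol_Pow[of "{1..d::nat}"] by simp
  then show ?case
    by (intro exI[of _ d] exI[of _ "{{1..d}}"] exI[of _ "\<lambda>_. d"]) auto
next
  case (add a M)
  have ad: "a < d" using add.prems by simp
  obtain n S \<alpha> where S: "finite S" "{1..d} \<in> S" "\<Union>S = {1..n}"
     "\<forall>H\<in>S. card H = d \<and> finite H" "\<forall>H\<in>S. H \<inter> {1..d} = {1..\<alpha> H}"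
     "\<forall>H\<in>S. \<forall>H'\<in>S. H \<noteq> H' \<longrightarrow> H \<inter> H' \<subseteq> {1..d}"
     "cpol (gen_complex S) = smult (of_nat (size M + 1)) (monom 1 d) - (\<Sum>a\<in>#M. monom 1 a)"
    using add.IH add.prems by auto
  have nd: "d \<le> n" using S(2,3) d1 by (metis Sup_upper atLeastAtMost_iff atLeastatMost_subset_iff order_refl)
  have Hsub: "H \<subseteq> {1..n}" if "H \<in> S" for H using S(3) that by blast
  define F where "F = {1..a} \<union> {n+1..n+(d-a)}"
  have FnS: "F \<notin> S"
  proof
    assume FS: "F \<in> S"
    have "n + 1 \<in> {n+1..n+(d-a)}" using ad by simp
    then have "n + 1 \<in> F" unfolding F_def by blast
    then have "n + 1 \<in> {1..n}" using Hsub[OF FS] by blast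
    then show False by simp
  qed
  have cF: "card F = d"
  proof -
    have "{1..a} \<inter> {n+1..n+(d-a)} = {}" using ad nd by auto
    then have "card F = card {1..a} + card {n+1..n+(d-a)}" unfolding F_def by (simp add: card_Un_disjoint)
    then show ?thesis using ad by simp
  qed
  have fF: "finite F" unfolding F_def by simp
  have F1: "F \<inter> {1..d} = {1..a}" unfolding F_def using ad nd by auto
  have HF: "H \<inter> F \<subseteq> {1..a}" if "H \<in> S" for H
    using Hsub[OF that] unfolding F_def by auto
  have inter: "gen_complex S \<inter> Pow F = Pow {1..a}"
  proof
    show "gen_complex S \<inter> Pow F \<subseteq> Pow {1..a}"
      using HF unfolding gen_complex_def by blast
    show "Pow {1..a} \<subseteq> gen_complex S \<inter> Pow F"
    proof
      fix x assume x: "x \<in> Pow {1..a}"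
      then have "x \<subseteq> {1..d}" using ad by auto
      then have "x \<in> gen_complex S" using S(2) unfolding gen_complex_def by blast
      moreover have "x \<in> Pow F" using x unfolding F_def by auto
      ultimately show "x \<in> gen_complex S \<inter> Pow F" by blast
    qed
  qed
  have cp: "cpol (gen_complex (insert F S)) = cpol (gen_complex S) + monom 1 d - monom 1 a"
  proof -
    have "{1..a} \<subseteq> F" unfolding F_def by auto
    then show ?thesis using glue[OF S(1) _ fF inter] S(4) cF by auto
  qed
  show ?case
  proof (intro exI[of _ "n + (d - a)"] exI[of _ "insert F S"] exI[of _ "\<alpha>(F := a)"] conjI)
    show "finite (insert F S)" using S(1) by simp
    show "{1..d} \<in> insert F S" using S(2) by simp
    show "\<Union>(insert F S) = {1..n + (d - a)}" using S(3) nd ad unfolding F_def by auto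
    show "\<forall>H\<in>insert F S. card H = d \<and> finite H" using S(4) cF fF by simp
    show "\<forall>H\<in>insert F S. H \<inter> {1..d} = {1..(\<alpha>(F := a)) H}" using S(5) F1 FnS by auto
    show "\<forall>H\<in>insert F S. \<forall>H'\<in>insert F S. H \<noteq> H' \<longrightarrow> H \<inter> H' \<subseteq> {1..d}"
      using S(6) HF ad by fastforce
    show "cpol (gen_complex (insert F S)) = smult (of_nat (size (add_mset a M) + 1)) (monom 1 d) - (\<Sum>a\<in>#add_mset a M. monom 1 a)"
    proof -
      have "of_nat (size (add_mset a M) + 1) = (of_nat (size M + 1) + 1 :: int)" by simp
      then have e: "smult (of_nat (size (add_mset a M) + 1)) (monom 1 d) = smult (of_nat (size M + 1)) (monom 1 d) + monom (1::int) d"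
        by (simp only: smult_add_left smult_1_left)
      have e2: "(\<Sum>a\<in>#add_mset a M. monom (1::int) a) = monom 1 a + (\<Sum>a\<in>#M. monom 1 a)" by simp
      show ?thesis unfolding cp S(7) e e2 by (simp only: diff_add_eq diff_diff_eq add.commute)
    qed
  qed
qed

lemma pcompose_power: "pcompose (p ^ n) q = (pcompose p q) ^ n"
  by (induction n) (simp_all add: pcompose_1 pcompose_mult)

lemma X_inj:
  fixes u v :: "nat \<Rightarrow> int"
  assumes eq: "(\<Sum>i = 0..d. smult (u i) ([:-1,1:] ^ i)) = (\<Sum>i = 0..d. smult (v i) ([:-1,1:] ^ i))"
    and k: "k \<le> d"
  shows "u k = v k"
proof -
  have pc: "pcompose ([:-1,1:] :: int poly) [:1,1:] = monom 1 1"
    by (simp add: pcompose_pCons monom_Suc one_pCons)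
  have gen: "coeff (pcompose (\<Sum>i = 0..d. smult (w i) ([:-1,1:] ^ i)) [:1,1:]) k = w k" for w :: "nat \<Rightarrow> int"
  proof -
    have "pcompose (\<Sum>i = 0..d. smult (w i) ([:-1,1:] ^ i)) [:1,1:] = (\<Sum>i = 0..d. monom (w i) i)"
      by (simp add: pcompose_sum pcompose_smult pcompose_power pc monom_power smult_monom)
    then show ?thesis using k by (simp add: coeff_sum)
  qed
  show ?thesis using gen[of u] gen[of v] eq by simp
qed

lemma rep_monom: "(\<Sum>a\<in>#replicate_mset k x. monom (1::int) a) = monom (int k) x"
  by (induction k) (simp_all add: add_monom[symmetric])

lemma msum_facts:
  fixes m :: "nat \<Rightarrow> nat"
  assumes "finite I"
  shows "(\<forall>a\<in>#(\<Sum>i\<in>I. replicate_mset (m i) i). a \<in> I) \<and>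
         size (\<Sum>i\<in>I. replicate_mset (m i) i) = (\<Sum>i\<in>I. m i) \<and>
         (\<Sum>a\<in>#(\<Sum>i\<in>I. replicate_mset (m i) i). monom (1::int) a) = (\<Sum>i\<in>I. monom (int (m i)) i)"
  using assms
proof (induction I rule: finite_induct)
  case empty
  then show ?case by simp
next
  case (insert x I)
  show ?case using insert rep_monom[of "m x" x] by auto
qed

lemma c_to_forest:
  assumes d1: "d \<ge> 1"
    and C1: "\<forall>k\<in>{1..d}. (\<Sum>i = k..d. coeff (c_poly d f) i) > 0"
    and C2: "\<forall>i. 1 \<le> i \<and> i < d \<longrightarrow> coeff (c_poly d f) i \<le> 0"
  shows "\<exists>n \<Delta>. simplicial_complex n \<Delta> \<and> pure \<Delta> \<and> forest \<Delta> \<and> realizes d f \<Delta>"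
proof -
  define c where "c = coeff (c_poly d f)"
  have s1: "(\<Sum>i = 0..d. c i) = 1" using c_sum1[OF d1] unfolding c_def by simp
  have "(\<Sum>i = 0..d. c i) = c 0 + (\<Sum>i = Suc 0..d. c i)" by (simp add: sum.atLeast_Suc_atMost)
  moreover have "(\<Sum>i = 1..d. c i) > 0" using C1 d1 unfolding c_def by auto
  ultimately have c0: "c 0 \<le> 0" using s1 by simp
  have cneg: "c i \<le> 0" if "i < d" for i
    using c0 C2 that unfolding c_def by (cases "i = 0") auto
  define m where "m i = nat (- c i)" for i
  define M where "M = (\<Sum>i\<in>{0..<d}. replicate_mset (m i) i)"
  have MF: "(\<forall>a\<in>#M. a \<in> {0..<d})" "size M = (\<Sum>i\<in>{0..<d}. m i)"
     "(\<Sum>a\<in>#M. monom (1::int) a) = (\<Sum>i\<in>{0..<d}. monom (int (m i)) i)"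
    using msum_facts[of "{0..<d}" m] unfolding M_def by auto
  have "\<forall>a\<in>#M. a < d" using MF(1) by auto
  obtain n S \<alpha> where S: "finite S" "{1..d} \<in> S" "\<Union>S = {1..n}"
     "\<forall>H\<in>S. card H = d \<and> finite H" "\<forall>H\<in>S. H \<inter> {1..d} = {1..\<alpha> H}"
     "\<forall>H\<in>S. \<forall>H'\<in>S. H \<noteq> H' \<longrightarrow> H \<inter> H' \<subseteq> {1..d}"
     "cpol (gen_complex S) = smult (of_nat (size M + 1)) (monom 1 d) - (\<Sum>a\<in>#M. monom 1 a)"
    using construct[OF d1 \<open>\<forall>a\<in>#M. a < d\<close>] by (elim exE conjE) (rule that; assumption)
  have mi: "int (m i) = - c i" if "i < d" for i using cneg[OF that] unfolding m_def by simp
  have cpeq: "cpol (gen_complex S) = c_poly d f"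
  proof (rule poly_eqI)
    fix k
    have "coeff (cpol (gen_complex S)) k =
        (if d = k then int (size M + 1) else 0) - (\<Sum>i\<in>{0..<d}. if i = k then int (m i) else 0)"
      unfolding S(7) MF(3) by (simp add: coeff_sum)
    also have "\<dots> = (if d = k then int (size M + 1) else 0) - (if k < d then int (m k) else 0)"
      by (simp add: sum.delta)
    also have "\<dots> = c k"
    proof (cases "k < d")
      case True
      then show ?thesis using mi[OF True] by simp
    next
      case False
      show ?thesis
      proof (cases "k = d")
        case True
        have "(\<Sum>i = 0..d. c i) = (\<Sum>i = 0..<d. c i) + c d"
          by (simp add: atLeastLessThanSuc_atLeastAtMost[symmetric] sum.atLeastLessThan_Suc)
        moreover have "int (size M) = (\<Sum>i = 0..<d. - c i)" unfolding MF(2)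
          by (simp add: mi)
        moreover have "(\<Sum>i = 0..<d. - c i) = - (\<Sum>i = 0..<d. c i)" by (simp add: sum_negf)
        ultimately show ?thesis using True s1 by simp
      next
        case False
        then have "k > d" using \<open>\<not> k < d\<close> by simp
        then show ?thesis using c_high[OF d1] \<open>\<not> k < d\<close> unfolding c_def by simp
      qed
    qed
    finally show "coeff (cpol (gen_complex S)) k = coeff (c_poly d f) k" unfolding c_def .
  qed
  have anti: "\<forall>H\<in>S. \<forall>H'\<in>S. H \<subseteq> H' \<longrightarrow> H = H'"
    using S(4) by (metis card_subset_eq)
  have facS: "facets (gen_complex S) = S" by (rule facets_gen[OF anti])
  have fS: "\<forall>H\<in>S. finite H" using S(4) by simp
  have fG: "finite (gen_complex S)" using finite_gen[OF S(1) fS] .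
  have leG: "\<forall>A\<in>gen_complex S. card A \<le> d"
    using S(4) unfolding gen_complex_def by (auto intro: card_mono order_trans)
  have dG: "{1..d} \<in> gen_complex S" using S(2) unfolding gen_complex_def by auto
  have sc: "simplicial_complex n (gen_complex S)"
    unfolding simplicial_complex_def
  proof (intro conjI ballI allI impI)
    fix F assume "F \<in> gen_complex S"
    then show "F \<subseteq> {1..n}" using S(3) unfolding gen_complex_def by blast
  next
    fix i assume "i \<in> {1..n}"
    then obtain H where "H \<in> S" "i \<in> H" using S(3) by blast
    then show "{i} \<in> gen_complex S" unfolding gen_complex_def by auto
  next
    fix F G assume "F \<in> gen_complex S" "G \<subseteq> F"
    then show "G \<in> gen_complex S" unfolding gen_complex_def by blast
  qed
  have pu: "pure (gen_complex S)" unfolding pure_def facS using S(4) by simp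
  have interH: "H \<inter> H' = {1..min (\<alpha> H) (\<alpha> H')}" if "H \<in> S" "H' \<in> S" "H \<noteq> H'" for H H'
  proof -
    have "H \<inter> H' = (H \<inter> {1..d}) \<inter> (H' \<inter> {1..d})" using S(6) that by blast
    then show ?thesis using S(5) that by auto
  qed
  have fo: "forest (gen_complex S)"
    unfolding forest_def facS
  proof (intro allI impI)
    fix T assume T: "T \<subseteq> S \<and> T \<noteq> {}"
    have antiT: "\<forall>H\<in>T. \<forall>H'\<in>T. H \<subseteq> H' \<longrightarrow> H = H'" using anti T by blast
    have facT: "facets (gen_complex T) = T" by (rule facets_gen[OF antiT])
    show "card (facets (gen_complex T)) = 1 \<or> (\<exists>F. is_leaf (gen_complex T) F)"
    proof (cases "card T = 1")
      case True
      then show ?thesis using facT by simp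
    next
      case False
      obtain H0 where "H0 \<in> T" using T by blast
      then obtain F where F: "F \<in> T" "\<forall>H. H \<in> T \<longrightarrow> \<alpha> F \<le> \<alpha> H"
        using ex_has_least_nat[of "\<lambda>H. H \<in> T" H0 \<alpha>] by blast
      have "T \<noteq> {F}" using False by auto
      then obtain G where G: "G \<in> T" "G \<noteq> F" using F(1) by blast
      have TS: "\<And>H. H \<in> T \<Longrightarrow> H \<in> S" using T by blast
      have "\<forall>H\<in>T. H \<noteq> F \<longrightarrow> H \<inter> F \<subseteq> G \<inter> F"
      proof (intro ballI impI)
        fix H assume H: "H \<in> T" "H \<noteq> F"
        have "\<alpha> F \<le> \<alpha> H" using F(2) H(1) by blast
        then have "min (\<alpha> H) (\<alpha> F) = \<alpha> F" by simp
        then have hf: "H \<inter> F = {1..\<alpha> F}" using interH[OF TS[OF H(1)] TS[OF F(1)] H(2)] by simp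
        have "\<alpha> F \<le> \<alpha> G" using F(2) G(1) by blast
        then have "min (\<alpha> G) (\<alpha> F) = \<alpha> F" by simp
        then have gf: "G \<inter> F = {1..\<alpha> F}" using interH[OF TS[OF G(1)] TS[OF F(1)] G(2)] by simp
        from hf gf show "H \<inter> F \<subseteq> G \<inter> F" by simp
      qed
      then have "is_leaf (gen_complex T) F" unfolding is_leaf_def facT using F(1) G by blast
      then show ?thesis by blast
    qed
  qed
  have re: "realizes d f (gen_complex S)"
    unfolding realizes_def
  proof (intro conjI allI impI)
    show "max_face_card (gen_complex S) = d"
      unfolding max_face_card_def
    proof (rule Max_eqI)
      show "finite (card ` gen_complex S)" using fG by simp
      show "\<And>y. y \<in> card ` gen_complex S \<Longrightarrow> y \<le> d" using leG by auto
      have "card {1..d} = d" by simp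
      then show "d \<in> card ` gen_complex S" using dG by (metis imageI)
    qed
  next
    fix i assume i: "i < d"
    have "(\<Sum>i = 0..d. smult (int (card {A\<in>gen_complex S. card A = i})) ([:-1,1:] ^ i)) =
          (\<Sum>i = 0..d. smult (fm1 f i) ([:-1,1:] ^ i))"
      using cpol_group[OF fG leG] cpeq unfolding c_poly_def by simp
    from X_inj[OF this, of "i + 1"] i
    show "int (fnum (gen_complex S) i) = f i" unfolding fnum_def fm1_def by simp
  qed
  show ?thesis using sc pu fo re by blast
qed

theorem theorem1p2:
  fixes d :: nat and f :: "nat \<Rightarrow> int"
  assumes "d \<ge> 1" and "\<forall>i<d. f i > 0"
  shows "((\<exists>n \<Delta>. simplicial_complex n \<Delta> \<and> pure \<Delta> \<and> quasi_forest \<Delta> \<and> realizes d f \<Delta>)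
           \<longleftrightarrow> (\<exists>n \<Delta>. simplicial_complex n \<Delta> \<and> pure \<Delta> \<and> forest \<Delta> \<and> realizes d f \<Delta>))
       \<and> ((\<exists>n \<Delta>. simplicial_complex n \<Delta> \<and> pure \<Delta> \<and> forest \<Delta> \<and> realizes d f \<Delta>)
           \<longleftrightarrow> ((\<forall>k\<in>{1..d}. (\<Sum>i = k..d. coeff (c_poly d f) i) > 0) \<and>
                (\<forall>i. 1 \<le> i \<and> i < d \<longrightarrow> coeff (c_poly d f) i \<le> 0)))
       \<and> (((\<forall>k\<in>{1..d}. (\<Sum>i = k..d. coeff (c_poly d f) i) > 0) \<and>
                (\<forall>i. 1 \<le> i \<and> i < d \<longrightarrow> coeff (c_poly d f) i \<le> 0))
           \<longleftrightarrow> (0 < coeff (b_poly d f) 0 \<and>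
                (\<forall>i. 1 \<le> i \<and> i < d \<longrightarrow> coeff (b_poly d f) (i - 1) \<le> coeff (b_poly d f) i)))"
proof -
  let ?Q = "\<exists>n \<Delta>. simplicial_complex n \<Delta> \<and> pure \<Delta> \<and> quasi_forest \<Delta> \<and> realizes d f \<Delta>"
  let ?F = "\<exists>n \<Delta>. simplicial_complex n \<Delta> \<and> pure \<Delta> \<and> forest \<Delta> \<and> realizes d f \<Delta>"
  let ?C = "(\<forall>k\<in>{1..d}. (\<Sum>i = k..d. coeff (c_poly d f) i) > 0) \<and>
                (\<forall>i. 1 \<le> i \<and> i < d \<longrightarrow> coeff (c_poly d f) i \<le> 0)"
  have QC: "?Q \<Longrightarrow> ?C"
  proof -
    assume ?Q
    then obtain n \<Delta> where "simplicial_complex n \<Delta>" "pure \<Delta>" "quasi_forest \<Delta>" "realizes d f \<Delta>" by blast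
    then show ?C using qf_to_c[OF assms] by blast
  qed
  have CF: "?C \<Longrightarrow> ?F" using c_to_forest[OF assms(1)] by blast
  have FQ: "?F \<Longrightarrow> ?Q"
  proof -
    assume ?F
    then obtain n \<Delta> where D: "simplicial_complex n \<Delta>" "pure \<Delta>" "forest \<Delta>" "realizes d f \<Delta>" by blast
    have "finite \<Delta>"
      by (rule finite_subset[of _ "Pow {1..n}"]) (use D(1) in \<open>auto simp: simplicial_complex_def\<close>)
    then have "quasi_forest \<Delta>" using forest_qf D(3) by blast
    then show ?Q using D by blast
  qed
  show ?thesis using QC CF FQ iii_iv[OF assms(1), of f] by blast
qed

end
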